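(* Consider the correlation Bell expression $\mathcal B_{Z6}$ with Alice's settings indexed by pairs $(i,j)$, $1\le i<j\le 6$ (15 settings), Bob's settings indexed by $k=1,\dots,6$, and coefficient matrix $M_{(i,j),k}=\delta_{ik}-\delta_{jk}$. Then: (i) its maximal classical (local hidden variable) value is $18$; (ii) its maximal quantum value $Q(M)$ equals $6\sqrt{15}$, attained with $|\psi\rangle=\frac12\sum_{k=1}^4|kk\rangle\in\mathbb{C}^4\otimes\mathbb{C}^4$; (iii) its maximal value over qubits, $\max\sum M_{(i,j),k}\langle\psi|(\vec a_{ij}\cdot\vec\sigma)\otimes(\vec b_k\cdot\vec\sigma^T)|\psi\rangle$ over unit $|\psi\rangle\in\mathbb{C}^2\otimes\mathbb{C}^2$ and $\vec a_{ij},\vec b_k\in S^2$, equals $6(1+2\sqrt2)$. Hence the ratio of the maximal quantum value to the maximal qubit value is $\frac{\sqrt{120}-\sqrt{15}}{7}\approx1.0116>1$, i.e. the maximal quantum violation of this inequality cannot be attained with qubits.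
   Context: The quantum value is $Q(M)=\sup\sum_{(i,j),k}M_{(i,j),k}\langle\psi|A_{ij}\otimes B_k|\psi\rangle$ over all finite $D$, unit $|\psi\rangle\in\mathbb{C}^D\otimes\mathbb{C}^D$ and Hermitian $A_{ij},B_k$ on $\mathbb{C}^D$ with $A_{ij}^2=B_k^2=\mathbb{1}$. The classical value is the maximum of $\sum M_{(i,j),k}a_{ij}b_k$ over $a_{ij},b_k\in\{\pm1\}$. $\vec\sigma=(\sigma_x,\sigma_y,\sigma_z)$ are the Pauli matrices, $\vec\sigma^T$ their transposes, $\vec v\cdot\vec\sigma=\sum_k v_k\sigma_k$; $S^2$ is the unit sphere of $\mathbb{R}^3$. *)

theory Defs
  imports "Jordan_Normal_Form.Matrix"
begin

text \<open>Kronecker (tensor) product. Basis vector |a b> of C^m (x) C^n has index a*n + b.\<close>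
definition kron :: "complex mat \<Rightarrow> complex mat \<Rightarrow> complex mat" where
  "kron A B = mat (dim_row A * dim_row B) (dim_col A * dim_col B)
     (\<lambda>(i, j). A $$ (i div dim_row B, j div dim_col B) * B $$ (i mod dim_row B, j mod dim_col B))"

definition adj :: "complex mat \<Rightarrow> complex mat" where
  "adj A = transpose_mat (map_mat cnj A)"

definition observable :: "nat \<Rightarrow> complex mat \<Rightarrow> bool" where
  "observable D A \<longleftrightarrow> A \<in> carrier_mat D D \<and> adj A = A \<and> A * A = 1\<^sub>m D"

definition unit_vec_c :: "nat \<Rightarrow> complex vec \<Rightarrow> bool" where
  "unit_vec_c n \<psi> \<longleftrightarrow> \<psi> \<in> carrier_vec n \<and> map_vec cnj \<psi> \<bullet> \<psi> = 1"

definition expval :: "complex vec \<Rightarrow> complex mat \<Rightarrow> complex" where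
  "expval \<psi> X = map_vec cnj \<psi> \<bullet> (X *\<^sub>v \<psi>)"

definition classical_value :: "'x set \<Rightarrow> 'y set \<Rightarrow> ('x \<Rightarrow> 'y \<Rightarrow> real) \<Rightarrow> real" where
  "classical_value X Y M = Max {(\<Sum>x\<in>X. \<Sum>y\<in>Y. M x y * a x * b y) | a b.
      (\<forall>x\<in>X. a x \<in> {-1, 1}) \<and> (\<forall>y\<in>Y. b y \<in> {-1, 1})}"

text \<open>Values attainable in local dimension D (the expression is real for observables;
  we take the real part).\<close>
definition quantum_values :: "'x set \<Rightarrow> 'y set \<Rightarrow> ('x \<Rightarrow> 'y \<Rightarrow> real) \<Rightarrow> real set" where
  "quantum_values X Y M = {Re (\<Sum>x\<in>X. \<Sum>y\<in>Y. complex_of_real (M x y) * expval \<psi> (kron (A x) (B y))) |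
      D \<psi> A B. unit_vec_c (D * D) \<psi> \<and> (\<forall>x\<in>X. observable D (A x)) \<and> (\<forall>y\<in>Y. observable D (B y))}"

definition quantum_value :: "'x set \<Rightarrow> 'y set \<Rightarrow> ('x \<Rightarrow> 'y \<Rightarrow> real) \<Rightarrow> real" where
  "quantum_value X Y M = Sup (quantum_values X Y M)"

definition sigma_x :: "complex mat" where
  "sigma_x = mat 2 2 (\<lambda>(i, j). if i \<noteq> j then 1 else 0)"
definition sigma_y :: "complex mat" where
  "sigma_y = mat 2 2 (\<lambda>(i, j). if i = 0 \<and> j = 1 then - \<i> else if i = 1 \<and> j = 0 then \<i> else 0)"
definition sigma_z :: "complex mat" where
  "sigma_z = mat 2 2 (\<lambda>(i, j). if i = j then (if i = 0 then 1 else -1) else 0)"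

definition dot_sigma :: "real \<times> real \<times> real \<Rightarrow> complex mat" where
  "dot_sigma v = (case v of (v1, v2, v3) \<Rightarrow>
     complex_of_real v1 \<cdot>\<^sub>m sigma_x + complex_of_real v2 \<cdot>\<^sub>m sigma_y + complex_of_real v3 \<cdot>\<^sub>m sigma_z)"

definition dot_sigmaT :: "real \<times> real \<times> real \<Rightarrow> complex mat" where
  "dot_sigmaT v = (case v of (v1, v2, v3) \<Rightarrow>
     complex_of_real v1 \<cdot>\<^sub>m transpose_mat sigma_x + complex_of_real v2 \<cdot>\<^sub>m transpose_mat sigma_y
     + complex_of_real v3 \<cdot>\<^sub>m transpose_mat sigma_z)"

definition on_S2 :: "real \<times> real \<times> real \<Rightarrow> bool" where
  "on_S2 v = (case v of (v1, v2, v3) \<Rightarrow> v1\<^sup>2 + v2\<^sup>2 + v3\<^sup>2 = 1)"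

definition qubit_values :: "'x set \<Rightarrow> 'y set \<Rightarrow> ('x \<Rightarrow> 'y \<Rightarrow> real) \<Rightarrow> real set" where
  "qubit_values X Y M = {Re (\<Sum>x\<in>X. \<Sum>y\<in>Y. complex_of_real (M x y) *
        expval \<psi> (kron (dot_sigma (a x)) (dot_sigmaT (b y)))) |
      \<psi> a b. unit_vec_c 4 \<psi> \<and> (\<forall>x\<in>X. on_S2 (a x)) \<and> (\<forall>y\<in>Y. on_S2 (b y))}"

definition Z6_alice :: "(nat \<times> nat) set" where
  "Z6_alice = {(i, j). 1 \<le> i \<and> i < j \<and> j \<le> 6}"

definition Z6_bob :: "nat set" where
  "Z6_bob = {1..6}"

definition Z6_M :: "nat \<times> nat \<Rightarrow> nat \<Rightarrow> real" where
  "Z6_M p k = (case p of (i, j) \<Rightarrow> (if i = k then 1 else 0) - (if j = k then 1 else 0))"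

text \<open>The maximally entangled state (1/2) sum_{k=1}^4 |kk> in C^4 (x) C^4
  (0-based: |kk> has index 4k + k).\<close>
definition psi_max4 :: "complex vec" where
  "psi_max4 = vec 16 (\<lambda>n. if n div 4 = n mod 4 then 1/2 else 0)"

end

theory Submission
  imports Defs
begin

lemma sum_split:
  fixes f :: "nat \<Rightarrow> 'a::comm_monoid_add"
  shows "(\<Sum>i<n*D. f i) = (\<Sum>a<n. \<Sum>b<D. f (a*D+b))"
proof -
  have "(\<Sum>i<n*D. f i) = (\<Sum>a<n. sum f {a*D..<a*D+D})"
    using sum.nat_group[of f D n] by simp
  also have "\<dots> = (\<Sum>a<n. \<Sum>b<D. f (a*D+b))"
  proof (rule sum.cong[OF refl])
    fix a show "sum f {a*D..<a*D+D} = (\<Sum>b<D. f (a*D+b))"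
      using sum.shift_bounds_nat_ivl[of f 0 "a*D" D] by (simp add: atLeast0LessThan add.commute)
  qed
  finally show ?thesis .
qed

lemma divmod_aux: "b < (D::nat) \<Longrightarrow> (a*D+b) div D = a \<and> (a*D+b) mod D = b"
  by simp

lemma lt_DD: "a < (D::nat) \<Longrightarrow> b < D \<Longrightarrow> a*D+b < D*D"
proof -
  assume "a < D" "b < D"
  then have "a*D + b < a*D + D" by simp
  also have "\<dots> = (Suc a)*D" by simp
  also have "\<dots> \<le> D*D" using \<open>a<D\<close> mult_le_mono1[of "Suc a" D D] by simp
  finally show ?thesis .
qed

lemma expval_kron:
  assumes psi: "\<psi> \<in> carrier_vec (D*D)" and A: "A \<in> carrier_mat D D" and B: "B \<in> carrier_mat D D"
  shows "expval \<psi> (kron A B) = (\<Sum>a<D. \<Sum>b<D. cnj (\<psi>$(a*D+b)) *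
           (\<Sum>c<D. \<Sum>d<D. A$$(a,c) * B$$(b,d) * \<psi>$(c*D+d)))"
proof -
  have dk: "dim_row (kron A B) = D*D" "dim_col (kron A B) = D*D" using A B by (auto simp: kron_def)
  have k: "kron A B $$ (i,j) = A$$(i div D, j div D) * B$$(i mod D, j mod D)"
    if "i < D*D" "j < D*D" for i j using that A B by (auto simp: kron_def)
  have "expval \<psi> (kron A B) = (\<Sum>i<D*D. cnj(\<psi>$i) * (\<Sum>j<D*D. A$$(i div D, j div D)*B$$(i mod D, j mod D) * \<psi>$j))"
    unfolding expval_def scalar_prod_def using psi dk
    by (auto simp: k atLeast0LessThan scalar_prod_def intro!: sum.cong)
  also have "\<dots> = (\<Sum>a<D. \<Sum>b<D. cnj (\<psi>$(a*D+b)) *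
           (\<Sum>c<D. \<Sum>d<D. A$$(a,c) * B$$(b,d) * \<psi>$(c*D+d)))"
    by (simp add: sum_split)
  finally show ?thesis .
qed

lemma swap3: "(\<Sum>a\<in>I. \<Sum>b\<in>J. \<Sum>c\<in>K. G a b c) = (\<Sum>c\<in>K. \<Sum>b\<in>J. \<Sum>a\<in>I. G a b c)"
proof -
  have "(\<Sum>a\<in>I. \<Sum>b\<in>J. \<Sum>c\<in>K. G a b c) = (\<Sum>b\<in>J. \<Sum>a\<in>I. \<Sum>c\<in>K. G a b c)" by (rule sum.swap)
  also have "\<dots> = (\<Sum>b\<in>J. \<Sum>c\<in>K. \<Sum>a\<in>I. G a b c)" by (rule sum.cong[OF refl], rule sum.swap)
  also have "\<dots> = (\<Sum>c\<in>K. \<Sum>b\<in>J. \<Sum>a\<in>I. G a b c)" by (rule sum.swap)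
  finally show ?thesis .
qed

definition pA :: "nat \<Rightarrow> complex mat \<Rightarrow> complex vec \<Rightarrow> nat \<Rightarrow> nat \<Rightarrow> complex" where
  "pA D A \<psi> a b = (\<Sum>c<D. A$$(a,c) * \<psi>$(c*D+b))"
definition qC :: "nat \<Rightarrow> complex mat \<Rightarrow> complex vec \<Rightarrow> nat \<Rightarrow> nat \<Rightarrow> complex" where
  "qC D C \<psi> a b = (\<Sum>d<D. C$$(b,d) * \<psi>$(a*D+d))"

lemma test1:
  assumes psi: "\<psi> \<in> carrier_vec (D*D)" and A: "A \<in> carrier_mat D D" and B: "B \<in> carrier_mat D D"
  shows "expval \<psi> (kron A B) = (\<Sum>a<D. \<Sum>b<D. \<Sum>c<D. (\<Sum>d<D. cnj (\<psi>$(a*D+b)) * A$$(a,c) * B$$(b,d) * \<psi>$(c*D+d)))"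
  unfolding expval_kron[OF psi A B] sum_distrib_left 
  by (simp add: mult.assoc)

lemma expval_pq:
  assumes psi: "\<psi> \<in> carrier_vec (D*D)" and A: "A \<in> carrier_mat D D" and B: "B \<in> carrier_mat D D"
    and herm: "\<And>i j. i<D \<Longrightarrow> j<D \<Longrightarrow> A$$(j,i) = cnj(A$$(i,j))"
  shows "expval \<psi> (kron A B) = (\<Sum>a<D. \<Sum>b<D. cnj (pA D A \<psi> a b) * qC D B \<psi> a b)"
proof -
  have "expval \<psi> (kron A B) = (\<Sum>c<D. \<Sum>b<D. \<Sum>a<D. (\<Sum>d<D. cnj (\<psi>$(a*D+b)) * A$$(a,c) * B$$(b,d) * \<psi>$(c*D+d)))"
    unfolding test1[OF psi A B] by (rule swap3)
  also have "\<dots> = (\<Sum>a<D. \<Sum>b<D. cnj (pA D A \<psi> a b) * qC D B \<psi> a b)"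
  proof (rule sum.cong[OF refl], rule sum.cong[OF refl])
    fix c b assume c: "c \<in> {..<D}" and b: "b \<in> {..<D}"
    have "cnj (pA D A \<psi> c b) = (\<Sum>a<D. A$$(a,c) * cnj (\<psi>$(a*D+b)))"
      unfolding pA_def cnj_sum
    proof (rule sum.cong[OF refl])
      fix a assume "a \<in> {..<D}"
      then show "cnj (A $$ (c, a) * \<psi> $ (a * D + b)) = A $$ (a, c) * cnj (\<psi> $ (a * D + b))"
        using herm[of c a] c by simp
    qed
    then show "(\<Sum>a<D. (\<Sum>d<D. cnj (\<psi>$(a*D+b)) * A$$(a,c) * B$$(b,d) * \<psi>$(c*D+d))) = cnj (pA D A \<psi> c b) * qC D B \<psi> c b"
      unfolding qC_def by (simp add: sum_product mult_ac) (rule sum.swap)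
  qed
  finally show ?thesis .
qed

lemma gen_norm:
  fixes X :: "nat \<Rightarrow> nat \<Rightarrow> complex" and v :: "nat \<Rightarrow> complex"
  assumes orth: "\<And>d d'. d<D \<Longrightarrow> d'<D \<Longrightarrow> (\<Sum>b<D. cnj (X b d) * X b d') = (if d = d' then c else 0)"
  shows "(\<Sum>b<D. cnj (\<Sum>d<D. X b d * v d) * (\<Sum>d<D. X b d * v d)) = c * (\<Sum>d<D. cnj (v d) * v d)"
proof -
  have "(\<Sum>b<D. cnj (\<Sum>d<D. X b d * v d) * (\<Sum>d<D. X b d * v d))
      = (\<Sum>b<D. \<Sum>d<D. \<Sum>d'<D. (cnj (X b d) * cnj (v d)) * (X b d' * v d'))"
    unfolding cnj_sum sum_product by simp
  also have "\<dots> = (\<Sum>d<D. \<Sum>b<D. \<Sum>d'<D. (cnj (X b d) * cnj (v d)) * (X b d' * v d'))"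
    by (rule sum.swap)
  also have "\<dots> = (\<Sum>d<D. \<Sum>d'<D. \<Sum>b<D. (cnj (X b d) * cnj (v d)) * (X b d' * v d'))"
    by (rule sum.cong[OF refl], rule sum.swap)
  also have "\<dots> = (\<Sum>d<D. \<Sum>d'<D. (cnj (v d) * v d') * (\<Sum>b<D. cnj (X b d) * X b d'))"
    by (simp add: sum_distrib_left mult_ac)
  also have "\<dots> = (\<Sum>d<D. \<Sum>d'<D. (cnj (v d) * v d') * (if d = d' then c else 0))"
    by (intro sum.cong refl) (simp add: orth)
  also have "\<dots> = (\<Sum>d<D. c * (cnj (v d) * v d))"
    by (intro sum.cong refl) (simp add: if_distrib cong: if_cong)
  also have "\<dots> = c * (\<Sum>d<D. cnj (v d) * v d)" by (simp add: sum_distrib_left)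
  finally show ?thesis .
qed

lemma norm_psi:
  assumes "\<psi> \<in> carrier_vec (D*D)"
  shows "map_vec cnj \<psi> \<bullet> \<psi> = (\<Sum>a<D. \<Sum>b<D. cnj (\<psi>$(a*D+b)) * \<psi>$(a*D+b))"
proof -
  have "map_vec cnj \<psi> \<bullet> \<psi> = (\<Sum>i<D*D. cnj (\<psi>$i) * \<psi>$i)"
    using assms by (auto simp: scalar_prod_def atLeast0LessThan intro!: sum.cong)
  also have "\<dots> = (\<Sum>a<D. \<Sum>b<D. cnj (\<psi>$(a*D+b)) * \<psi>$(a*D+b))" by (rule sum_split)
  finally show ?thesis .
qed

lemma norm_q:
  assumes orth: "\<And>d d'. d<D \<Longrightarrow> d'<D \<Longrightarrow> (\<Sum>b<D. cnj (C$$(b,d)) * C$$(b,d')) = (if d = d' then c else 0)"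
  shows "(\<Sum>a<D. \<Sum>b<D. cnj (qC D C \<psi> a b) * qC D C \<psi> a b)
     = c * (\<Sum>a<D. \<Sum>b<D. cnj (\<psi>$(a*D+b)) * \<psi>$(a*D+b))"
proof -
  have "(\<Sum>a<D. \<Sum>b<D. cnj (qC D C \<psi> a b) * qC D C \<psi> a b)
     = (\<Sum>a<D. c * (\<Sum>b<D. cnj (\<psi>$(a*D+b)) * \<psi>$(a*D+b)))"
    unfolding qC_def
    by (rule sum.cong[OF refl], rule gen_norm[where X="\<lambda>b d. C$$(b,d)"], rule orth)
  then show ?thesis by (simp add: sum_distrib_left)
qed

lemma norm_p:
  assumes orth: "\<And>d d'. d<D \<Longrightarrow> d'<D \<Longrightarrow> (\<Sum>b<D. cnj (A$$(b,d)) * A$$(b,d')) = (if d = d' then c else 0)"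
  shows "(\<Sum>a<D. \<Sum>b<D. cnj (pA D A \<psi> a b) * pA D A \<psi> a b)
     = c * (\<Sum>a<D. \<Sum>b<D. cnj (\<psi>$(a*D+b)) * \<psi>$(a*D+b))"
proof -
  have "(\<Sum>a<D. \<Sum>b<D. cnj (pA D A \<psi> a b) * pA D A \<psi> a b) = (\<Sum>b<D. \<Sum>a<D. cnj (pA D A \<psi> a b) * pA D A \<psi> a b)"
    by (rule sum.swap)
  also have "\<dots> = (\<Sum>b<D. c * (\<Sum>a<D. cnj (\<psi>$(a*D+b)) * \<psi>$(a*D+b)))"
    unfolding pA_def
    by (rule sum.cong[OF refl], rule gen_norm[where X="\<lambda>b d. A$$(b,d)"], rule orth)
  also have "\<dots> = c * (\<Sum>a<D. \<Sum>b<D. cnj (\<psi>$(a*D+b)) * \<psi>$(a*D+b))"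
    by (simp add: sum_distrib_left) (rule sum.swap)
  finally show ?thesis .
qed

lemma orth_of_obs:
  assumes "A \<in> carrier_mat D D" "\<And>i j. i<D \<Longrightarrow> j<D \<Longrightarrow> A$$(j,i) = cnj(A$$(i,j))" "A * A = c \<cdot>\<^sub>m 1\<^sub>m D"
    "d < D" "d' < D"
  shows "(\<Sum>b<D. cnj (A$$(b,d)) * A$$(b,d')) = (if d = d' then c else 0)"
proof -
  have "(A*A)$$(d,d') = (\<Sum>b<D. A$$(d,b) * A$$(b,d'))"
    using assms(1,4,5) by (auto simp: scalar_prod_def atLeast0LessThan)
  moreover have "(A*A)$$(d,d') = (if d = d' then c else 0)" using assms(1,3,4,5) by simp
  moreover have "(\<Sum>b<D. cnj (A$$(b,d)) * A$$(b,d')) = (\<Sum>b<D. A$$(d,b) * A$$(b,d'))"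
  proof (rule sum.cong[OF refl])
    fix b assume "b \<in> {..<D}" then show "cnj (A$$(b,d)) * A$$(b,d') = A$$(d,b) * A$$(b,d')"
      using assms(2)[of b d] assms(4) by simp
  qed
  ultimately show ?thesis by simp
qed

lemma herm_of_adj:
  assumes "A \<in> carrier_mat D D" "adj A = A" "i<D" "j<D"
  shows "A$$(j,i) = cnj(A$$(i,j))"
proof -
  have "adj A $$ (j,i) = cnj (A$$(i,j))" using assms(1,3,4) unfolding adj_def by simp
  then show ?thesis using assms(2) by simp
qed

lemma re_ineq:
  fixes p r :: complex and l :: real
  assumes "l > 0"
  shows "Re (cnj p * r) \<le> (l * Re (cnj p * p) + Re (cnj r * r) / l) / 2"
proof -
  have "0 \<le> (l * Re p - Re r)^2 + (l * Im p - Im r)^2" by simp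
  then have "2 * l * (Re p * Re r + Im p * Im r) \<le> l * (l * (Re p ^2 + Im p ^2)) + (Re r^2 + Im r^2)"
    by (simp add: power2_eq_square algebra_simps)
  then have "Re p * Re r + Im p * Im r \<le> (l * (Re p ^2 + Im p ^2) + (Re r^2 + Im r^2) / l) / 2"
    using assms by (simp add: field_simps)
  then show ?thesis by (simp add: power2_eq_square)
qed

definition nrm2 :: "nat \<Rightarrow> (nat \<Rightarrow> nat \<Rightarrow> complex) \<Rightarrow> real" where
  "nrm2 D f = (\<Sum>a<D. \<Sum>b<D. Re (cnj (f a b) * f a b))"

lemma sum2_lin:
  fixes X Y :: "nat \<Rightarrow> nat \<Rightarrow> real"
  shows "(\<Sum>a<D. \<Sum>b<D. (l * X a b + Y a b / l) / 2) = (l * (\<Sum>a<D. \<Sum>b<D. X a b) + (\<Sum>a<D. \<Sum>b<D. Y a b) / l) / 2"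
  by (simp add: sum.distrib sum_divide_distrib[symmetric] sum_distrib_left add_divide_distrib)

lemma term_bound:
  assumes psi: "\<psi> \<in> carrier_vec (D*D)" and A: "A \<in> carrier_mat D D"
    and B1: "B1 \<in> carrier_mat D D" and B2: "B2 \<in> carrier_mat D D"
    and herm: "\<And>i j. i<D \<Longrightarrow> j<D \<Longrightarrow> A$$(j,i) = cnj(A$$(i,j))"
    and orth: "\<And>d d'. d<D \<Longrightarrow> d'<D \<Longrightarrow> (\<Sum>b<D. cnj (A$$(b,d)) * A$$(b,d')) = (if d = d' then 1 else 0)"
    and l: "l > 0"
  shows "Re (expval \<psi> (kron A B1) - expval \<psi> (kron A B2)) \<le>
     (l * Re (map_vec cnj \<psi> \<bullet> \<psi>) + nrm2 D (\<lambda>a b. qC D B1 \<psi> a b - qC D B2 \<psi> a b) / l) / 2"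
proof -
  let ?p = "pA D A \<psi>" and ?r = "\<lambda>a b. qC D B1 \<psi> a b - qC D B2 \<psi> a b"
  have "expval \<psi> (kron A B1) - expval \<psi> (kron A B2) = (\<Sum>a<D. \<Sum>b<D. cnj (?p a b) * ?r a b)"
    using expval_pq[OF psi A B1 herm] expval_pq[OF psi A B2 herm]
    by (simp add: sum_subtractf right_diff_distrib)
  then have "Re (expval \<psi> (kron A B1) - expval \<psi> (kron A B2)) = (\<Sum>a<D. \<Sum>b<D. Re (cnj (?p a b) * ?r a b))"
    by simp
  also have "\<dots> \<le> (\<Sum>a<D. \<Sum>b<D. (l * Re (cnj (?p a b) * ?p a b) + Re (cnj (?r a b) * ?r a b) / l) / 2)"
    by (intro sum_mono re_ineq l)
  also have "\<dots> = (l * nrm2 D ?p + nrm2 D ?r / l) / 2"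
    unfolding nrm2_def by (rule sum2_lin)
  also have "nrm2 D ?p = Re (map_vec cnj \<psi> \<bullet> \<psi>)"
  proof -
    have "nrm2 D ?p = Re (\<Sum>a<D. \<Sum>b<D. cnj (?p a b) * ?p a b)"
      unfolding nrm2_def by (simp only: Re_sum)
    also have "\<dots> = Re (map_vec cnj \<psi> \<bullet> \<psi>)"
      using norm_p[of D A 1 \<psi>, OF orth] norm_psi[OF psi] by simp
    finally show ?thesis .
  qed
  finally show ?thesis .
qed

lemma le6: "(i::nat) \<le> 6 \<Longrightarrow> i = 0 \<or> i = 1 \<or> i = 2 \<or> i = 3 \<or> i = 4 \<or> i = 5 \<or> i = 6" by arith
lemma Z6_alice_eq: "Z6_alice = {(1,2),(1,3),(1,4),(1,5),(1,6),(2,3),(2,4),(2,5),(2,6),(3,4),(3,5),(3,6),(4,5),(4,6),(5,6)}"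
proof -
  have "(i,j) \<in> Z6_alice \<longleftrightarrow> (i,j) \<in> {(1,2),(1,3),(1,4),(1,5),(1,6),(2,3),(2,4),(2,5),(2,6),(3,4),(3,5),(3,6),(4,5),(4,6),(5,6)}" for i j
  proof
    assume "(i,j) \<in> Z6_alice"
    then have h: "1 \<le> i" "i < j" "j \<le> 6" unfolding Z6_alice_def by auto
    then have "i \<le> 6" by simp
    from le6[OF this] le6[OF h(3)] h show "(i,j) \<in> {(1,2),(1,3),(1,4),(1,5),(1,6),(2,3),(2,4),(2,5),(2,6),(3,4),(3,5),(3,6),(4,5),(4,6),(5,6)}"
      by (elim disjE; simp)
  qed (auto simp: Z6_alice_def)
  note * = this
  show ?thesis
  proof (rule Set.set_eqI)
    fix x :: "nat \<times> nat" show "x \<in> Z6_alice \<longleftrightarrow> x \<in> {(1,2),(1,3),(1,4),(1,5),(1,6),(2,3),(2,4),(2,5),(2,6),(3,4),(3,5),(3,6),(4,5),(4,6),(5,6)}"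
      using *[of "fst x" "snd x"] by simp
  qed
qed
lemma Z6_bob_eq: "Z6_bob = {1,2,3,4,5,6}"
  unfolding Z6_bob_def by auto
lemma card_Z6: "card Z6_alice = 15" unfolding Z6_alice_eq by simp
lemma fin_Z6: "finite Z6_alice" unfolding Z6_alice_eq by simp

lemma sumM_gen:
  fixes F :: "nat \<Rightarrow> 'a::real_algebra_1"
  assumes "x \<in> Z6_alice"
  shows "(\<Sum>y\<in>Z6_bob. of_real (Z6_M x y) * F y) = F (fst x) - F (snd x)"
proof -
  obtain i j where x: "x = (i,j)" by (cases x)
  with assms have ij: "i \<in> Z6_bob" "j \<in> Z6_bob" unfolding Z6_alice_def Z6_bob_def by auto
  have "(\<Sum>y\<in>Z6_bob. of_real (Z6_M x y) * F y) = (\<Sum>y\<in>Z6_bob. (if i = y then F y else 0) - (if j = y then F y else 0))"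
    unfolding x Z6_M_def by (intro sum.cong refl) (auto simp: left_diff_distrib)
  also have "\<dots> = F i - F j" using ij by (simp add: sum_subtractf Z6_bob_def)
  finally show ?thesis using x by simp
qed

lemma val_pairs:
  "(\<Sum>x\<in>Z6_alice. \<Sum>y\<in>Z6_bob. Z6_M x y * a x * (b y::real)) = (\<Sum>x\<in>Z6_alice. a x * (b (fst x) - b (snd x)))"
proof (rule sum.cong[OF refl])
  fix x assume x: "x \<in> Z6_alice"
  have "(\<Sum>y\<in>Z6_bob. Z6_M x y * a x * b y) = a x * (\<Sum>y\<in>Z6_bob. of_real (Z6_M x y) * b y)"
    by (simp add: sum_distrib_left mult_ac)
  also have "\<dots> = a x * (b (fst x) - b (snd x))" using sumM_gen[OF x, of b] by simp
  finally show "(\<Sum>y\<in>Z6_bob. Z6_M x y * a x * b y) = a x * (b (fst x) - b (snd x))" .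
qed

lemma pm1_term: "(a::real) \<in> {-1,1} \<Longrightarrow> u \<in> {-1,1} \<Longrightarrow> v \<in> {-1,1} \<Longrightarrow> a * (u - v) \<le> 1 - u * v"
  by auto

lemma cl_upper:
  assumes a: "\<forall>x\<in>Z6_alice. a x \<in> {-1, 1::real}" and b: "\<forall>y\<in>Z6_bob. b y \<in> {-1, 1::real}"
  shows "(\<Sum>x\<in>Z6_alice. \<Sum>y\<in>Z6_bob. Z6_M x y * a x * b y) \<le> 18"
proof -
  have bb: "b y \<in> {-1,1}" if "1 \<le> y" "y \<le> 6" for y using b that unfolding Z6_bob_def by auto
  have "(\<Sum>x\<in>Z6_alice. \<Sum>y\<in>Z6_bob. Z6_M x y * a x * b y) \<le> (\<Sum>x\<in>Z6_alice. 1 - b (fst x) * b (snd x))"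
    unfolding val_pairs
  proof (rule sum_mono)
    fix x assume x: "x \<in> Z6_alice"
    then have "1 \<le> fst x" "fst x \<le> 6" "1 \<le> snd x" "snd x \<le> 6" unfolding Z6_alice_def by auto
    then show "a x * (b (fst x) - b (snd x)) \<le> 1 - b (fst x) * b (snd x)"
      using pm1_term[OF _ bb bb] a x by blast
  qed
  also have "\<dots> \<le> 18"
  proof -
    have sq: "b k * b k = 1" if "1 \<le> k" "k \<le> 6" for k using bb[OF that] by auto
    let ?P = "b 1 * b 2 + b 1 * b 3 + b 1 * b 4 + b 1 * b 5 + b 1 * b 6 + b 2 * b 3 + b 2 * b 4 + b 2 * b 5 + b 2 * b 6
       + b 3 * b 4 + b 3 * b 5 + b 3 * b 6 + b 4 * b 5 + b 4 * b 6 + b 5 * b 6"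
    have e: "(\<Sum>x\<in>Z6_alice. 1 - b (fst x) * b (snd x)) = 15 - ?P"
      unfolding Z6_alice_eq by simp
    have "(b 1 + b 2 + b 3 + b 4 + b 5 + b 6)^2 = b 1 * b 1 + b 2 * b 2 + b 3 * b 3 + b 4 * b 4 + b 5 * b 5 + b 6 * b 6 + 2 * ?P"
      by (simp add: power2_eq_square algebra_simps)
    also have "\<dots> = 6 + 2 * ?P" using sq[of 1] sq[of 2] sq[of 3] sq[of 4] sq[of 5] sq[of 6] by simp
    finally have "0 \<le> 6 + 2 * ?P" by (metis zero_le_power2)
    then show ?thesis unfolding e by simp
  qed
  finally show ?thesis .
qed

lemma classical_18: "classical_value Z6_alice Z6_bob Z6_M = 18"
proof -
  let ?v = "\<lambda>a b. (\<Sum>x\<in>Z6_alice. \<Sum>y\<in>Z6_bob. Z6_M x y * a x * b y)"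
  let ?S = "{?v a b | a b. (\<forall>x\<in>Z6_alice. a x \<in> {-1, 1}) \<and> (\<forall>y\<in>Z6_bob. b y \<in> {-1, 1})}"
  have fin: "finite ?S"
  proof (rule finite_subset)
    show "?S \<subseteq> (\<lambda>(a,b). ?v a b) ` (PiE Z6_alice (\<lambda>_. {-1,1}) \<times> PiE Z6_bob (\<lambda>_. {-1,1}))"
    proof
      fix v assume "v \<in> ?S"
      then obtain a b where v: "v = ?v a b" and a: "\<forall>x\<in>Z6_alice. a x \<in> {-1, 1}" and b: "\<forall>y\<in>Z6_bob. b y \<in> {-1, 1}"
        by blast
      have "v = ?v (restrict a Z6_alice) (restrict b Z6_bob)" unfolding v by (intro sum.cong refl) simp
      moreover have "(restrict a Z6_alice, restrict b Z6_bob) \<in> PiE Z6_alice (\<lambda>_. {-1,1}) \<times> PiE Z6_bob (\<lambda>_. {-1,1})"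
        using a b by auto
      ultimately show "v \<in> (\<lambda>(a,b). ?v a b) ` (PiE Z6_alice (\<lambda>_. {-1,1}) \<times> PiE Z6_bob (\<lambda>_. {-1,1}))"
        by (intro rev_image_eqI[of "(restrict a Z6_alice, restrict b Z6_bob)"]) simp_all
    qed
    show "finite ((\<lambda>(a,b). ?v a b) ` (PiE Z6_alice (\<lambda>_. {-1,1}) \<times> PiE Z6_bob (\<lambda>_. {-1::real,1})))"
      by (intro finite_imageI finite_cartesian_product finite_PiE fin_Z6) (auto simp: Z6_bob_def)
  qed
  define b0 :: "nat \<Rightarrow> real" where "b0 k = (if k \<le> 3 then 1 else -1)" for k
  have "?v (\<lambda>_. 1) b0 = (\<Sum>x\<in>Z6_alice. (\<lambda>_. 1) x * (b0 (fst x) - b0 (snd x)))" by (rule val_pairs)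
  also have "\<dots> = 18" unfolding Z6_alice_eq b0_def by simp
  finally have "?v (\<lambda>_. 1) b0 = 18" .
  moreover have "(\<forall>x\<in>Z6_alice. (\<lambda>_. 1::real) x \<in> {-1,1}) \<and> (\<forall>y\<in>Z6_bob. b0 y \<in> {-1,1})"
    by (auto simp: b0_def)
  ultimately have mem: "18 \<in> ?S" unfolding mem_Collect_eq by (intro exI[of _ "\<lambda>_. 1"] exI[of _ b0]) simp
  have ub: "\<forall>v\<in>?S. v \<le> 18" using cl_upper by blast
  show ?thesis unfolding classical_value_def
    by (rule Max_eqI[OF fin]) (use ub mem in auto)
qed


definition gl :: "(nat \<Rightarrow> real) \<Rightarrow> complex list list" where
  "gl u = [[of_real (u 4), of_real (u 2) - \<i> * of_real (u 3), of_real (u 0) - \<i> * of_real (u 1), 0],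
           [of_real (u 2) + \<i> * of_real (u 3), - of_real (u 4), 0, of_real (u 0) - \<i> * of_real (u 1)],
           [of_real (u 0) + \<i> * of_real (u 1), 0, - of_real (u 4), - (of_real (u 2) - \<i> * of_real (u 3))],
           [0, of_real (u 0) + \<i> * of_real (u 1), - (of_real (u 2) + \<i> * of_real (u 3)), of_real (u 4)]]"

definition G :: "(nat \<Rightarrow> real) \<Rightarrow> complex mat" where
  "G u = mat 4 4 (\<lambda>(i,j). gl u ! i ! j)"
definition H :: "(nat \<Rightarrow> real) \<Rightarrow> complex mat" where
  "H u = mat 4 4 (\<lambda>(i,j). gl u ! j ! i)"

lemma lt4: "(i::nat) < 4 \<Longrightarrow> i = 0 \<or> i = 1 \<or> i = 2 \<or> i = 3" by arith

lemma sum4: "(\<Sum>k\<in>{0..<4::nat}. f k) = f 0 + f 1 + f 2 + f 3"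
  by (simp add: eval_nat_numeral)
lemma sum4': "(\<Sum>k<4::nat. f k) = f 0 + f 1 + f 2 + f 3"
  by (simp add: eval_nat_numeral)

definition sq5 :: "(nat \<Rightarrow> real) \<Rightarrow> real" where
  "sq5 u = (u 0)^2 + (u 1)^2 + (u 2)^2 + (u 3)^2 + (u 4)^2"

lemma G_sq: "G u * G u = complex_of_real (sq5 u) \<cdot>\<^sub>m 1\<^sub>m 4"
proof (rule eq_matI)
  fix i j assume "i < dim_row (complex_of_real (sq5 u) \<cdot>\<^sub>m 1\<^sub>m 4)" "j < dim_col (complex_of_real (sq5 u) \<cdot>\<^sub>m 1\<^sub>m 4)"
  then have i: "i < 4" and j: "j < 4" by auto
  show "(G u * G u) $$ (i, j) = (complex_of_real (sq5 u) \<cdot>\<^sub>m 1\<^sub>m 4) $$ (i, j)"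
    using lt4[OF i] lt4[OF j]
    by (elim disjE) (simp_all add: G_def gl_def scalar_prod_def sum4 sq5_def complex_eq_iff power2_eq_square algebra_simps)
qed (auto simp: G_def)


lemma H_sq: "H u * H u = complex_of_real (sq5 u) \<cdot>\<^sub>m 1\<^sub>m 4"
proof (rule eq_matI)
  fix i j assume "i < dim_row (complex_of_real (sq5 u) \<cdot>\<^sub>m 1\<^sub>m 4)" "j < dim_col (complex_of_real (sq5 u) \<cdot>\<^sub>m 1\<^sub>m 4)"
  then have i: "i < 4" and j: "j < 4" by auto
  show "(H u * H u) $$ (i, j) = (complex_of_real (sq5 u) \<cdot>\<^sub>m 1\<^sub>m 4) $$ (i, j)"
    using lt4[OF i] lt4[OF j]
    by (elim disjE) (simp_all add: H_def gl_def scalar_prod_def sum4 sq5_def complex_eq_iff power2_eq_square algebra_simps)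
qed (auto simp: H_def)

lemma G_adj: "adj (G u) = G u"
proof (rule eq_matI)
  fix i j assume "i < dim_row (G u)" "j < dim_col (G u)"
  then have i: "i < 4" and j: "j < 4" by (auto simp: G_def)
  show "adj (G u) $$ (i, j) = G u $$ (i, j)"
    using lt4[OF i] lt4[OF j]
    by (elim disjE) (simp_all add: adj_def G_def gl_def complex_eq_iff)
qed (auto simp: adj_def G_def)

lemma H_adj: "adj (H u) = H u"
proof (rule eq_matI)
  fix i j assume "i < dim_row (H u)" "j < dim_col (H u)"
  then have i: "i < 4" and j: "j < 4" by (auto simp: H_def)
  show "adj (H u) $$ (i, j) = H u $$ (i, j)"
    using lt4[OF i] lt4[OF j]
    by (elim disjE) (simp_all add: adj_def H_def gl_def complex_eq_iff)
qed (auto simp: adj_def H_def)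

lemma one_smult1: "(1::complex) \<cdot>\<^sub>m 1\<^sub>m n = 1\<^sub>m n"
  by (rule eq_matI) auto

lemma G_obs: "sq5 u = 1 \<Longrightarrow> observable 4 (G u)"
  unfolding observable_def using G_sq[of u] G_adj[of u] by (simp add: G_def one_smult1)
lemma H_obs: "sq5 u = 1 \<Longrightarrow> observable 4 (H u)"
  unfolding observable_def using H_sq[of u] H_adj[of u] by (simp add: H_def one_smult1)

lemma HG_trace: "(\<Sum>a<4. \<Sum>c<4. H u $$ (a,c) * G w $$ (a,c)) = 4 * complex_of_real (u 0 * w 0 + u 1 * w 1 + u 2 * w 2 + u 3 * w 3 + u 4 * w 4)"
  by (simp add: sum4' H_def G_def gl_def complex_eq_iff algebra_simps)

lemma G_diff: assumes "i < 4" "j < 4" shows "G u $$ (i,j) - G w $$ (i,j) = G (\<lambda>m. u m - w m) $$ (i,j)"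
  using lt4[OF assms(1)] lt4[OF assms(2)]
  by (elim disjE) (simp_all add: G_def gl_def complex_eq_iff)

lemma del1: fixes X :: "nat \<Rightarrow> complex" shows "a \<in> S \<Longrightarrow> finite S \<Longrightarrow> (\<Sum>b\<in>S. (if a = b then c else 0) * X b) = c * X a"
proof -
  assume "a \<in> S" "finite S"
  have "(\<Sum>b\<in>S. (if a = b then c else 0) * X b) = (\<Sum>b\<in>S. if a = b then c * X b else 0)"
    by (rule sum.cong) auto
  then show ?thesis using \<open>a \<in> S\<close> \<open>finite S\<close> by simp
qed
lemma del2: fixes X :: "nat \<Rightarrow> complex" shows "a \<in> S \<Longrightarrow> finite S \<Longrightarrow> (\<Sum>b\<in>S. X b * (if a = b then c else 0)) = X a * c"
proof -
  assume "a \<in> S" "finite S"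
  have "(\<Sum>b\<in>S. X b * (if a = b then c else 0)) = (\<Sum>b\<in>S. if a = b then X b * c else 0)"
    by (rule sum.cong) auto
  then show ?thesis using \<open>a \<in> S\<close> \<open>finite S\<close> by simp
qed

lemma expval_maxent:
  assumes psi: "\<psi> \<in> carrier_vec (D*D)" and A: "A \<in> carrier_mat D D" and B: "B \<in> carrier_mat D D"
    and ent: "\<And>a b. a < D \<Longrightarrow> b < D \<Longrightarrow> \<psi>$(a*D+b) = (if a = b then k else 0)"
  shows "expval \<psi> (kron A B) = cnj k * k * (\<Sum>a<D. \<Sum>c<D. A$$(a,c) * B$$(a,c))"
proof -
  have "expval \<psi> (kron A B) = (\<Sum>a<D. \<Sum>b<D. (if a = b then cnj k else 0) *
           (\<Sum>c<D. \<Sum>d<D. A$$(a,c) * B$$(b,d) * (if c = d then k else 0)))"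
    unfolding expval_kron[OF psi A B] by (intro sum.cong refl) (simp add: ent)
  also have "\<dots> = (\<Sum>a<D. cnj k * (\<Sum>c<D. A$$(a,c) * B$$(a,c) * k))"
  proof (intro sum.cong refl)
    fix a assume a: "a \<in> {..<D}"
    have "(\<Sum>b<D. (if a = b then cnj k else 0) * (\<Sum>c<D. \<Sum>d<D. A$$(a,c) * B$$(b,d) * (if c = d then k else 0)))
      = cnj k * (\<Sum>c<D. \<Sum>d<D. A$$(a,c) * B$$(a,d) * (if c = d then k else 0))"
      by (rule del1[OF a]) simp
    also have "\<dots> = cnj k * (\<Sum>c<D. A$$(a,c) * B$$(a,c) * k)"
      by (intro arg_cong[where f="\<lambda>z. cnj k * z"] sum.cong refl del2) auto
    finally show "(\<Sum>b<D. (if a = b then cnj k else 0) * (\<Sum>c<D. \<Sum>d<D. A$$(a,c) * B$$(b,d) * (if c = d then k else 0)))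
      = cnj k * (\<Sum>c<D. A$$(a,c) * B$$(a,c) * k)" .
  qed
  also have "\<dots> = cnj k * k * (\<Sum>a<D. \<Sum>c<D. A$$(a,c) * B$$(a,c))"
    by (simp add: sum_distrib_left sum_distrib_right mult_ac)
  finally show ?thesis .
qed


lemma obs_herm: "observable D A \<Longrightarrow> i<D \<Longrightarrow> j<D \<Longrightarrow> A$$(j,i) = cnj(A$$(i,j))"
  unfolding observable_def using herm_of_adj by blast

lemma obs_orth:
  assumes "observable D A" "d<D" "d'<D"
  shows "(\<Sum>b<D. cnj (A$$(b,d)) * A$$(b,d')) = (if d = d' then 1 else 0)"
proof -
  have o: "(1::complex) \<cdot>\<^sub>m 1\<^sub>m D = 1\<^sub>m D" by (rule eq_matI) auto
  have c: "A \<in> carrier_mat D D" and m: "A * A = 1 \<cdot>\<^sub>m 1\<^sub>m D"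
    using assms(1) unfolding observable_def o by auto
  show ?thesis by (rule orth_of_obs[OF c _ m assms(2,3)]) (rule obs_herm[OF assms(1)])
qed

lemma re_cnj: "Re (cnj w * w) = (Re w)^2 + (Im w)^2"
  by (simp add: power2_eq_square)

lemma six_id:
  fixes x1 x2 x3 x4 x5 x6 :: real
  shows "(x1-x2)^2 + (x1-x3)^2 + (x1-x4)^2 + (x1-x5)^2 + (x1-x6)^2 + (x2-x3)^2 + (x2-x4)^2 + (x2-x5)^2 + (x2-x6)^2
     + (x3-x4)^2 + (x3-x5)^2 + (x3-x6)^2 + (x4-x5)^2 + (x4-x6)^2 + (x5-x6)^2
     = 6*(x1^2+x2^2+x3^2+x4^2+x5^2+x6^2) - (x1+x2+x3+x4+x5+x6)^2"
  by (simp add: power2_eq_square algebra_simps)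

lemma six_le:
  fixes x1 x2 x3 x4 x5 x6 :: real
  shows "(x1-x2)^2 + (x1-x3)^2 + (x1-x4)^2 + (x1-x5)^2 + (x1-x6)^2 + (x2-x3)^2 + (x2-x4)^2 + (x2-x5)^2 + (x2-x6)^2
     + (x3-x4)^2 + (x3-x5)^2 + (x3-x6)^2 + (x4-x5)^2 + (x4-x6)^2 + (x5-x6)^2
     \<le> 6*(x1^2+x2^2+x3^2+x4^2+x5^2+x6^2)"
  unfolding six_id by simp

lemma pointwise6:
  fixes z :: "nat \<Rightarrow> complex"
  shows "(\<Sum>x\<in>Z6_alice. Re (cnj (z (fst x) - z (snd x)) * (z (fst x) - z (snd x))))
     \<le> 6 * (\<Sum>k\<in>Z6_bob. Re (cnj (z k) * z k))"
proof -
  have L: "(\<Sum>x\<in>Z6_alice. Re (cnj (z (fst x) - z (snd x)) * (z (fst x) - z (snd x))))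
    = (\<Sum>x\<in>Z6_alice. (Re (z (fst x)) - Re (z (snd x)))^2) + (\<Sum>x\<in>Z6_alice. (Im (z (fst x)) - Im (z (snd x)))^2)"
    unfolding re_cnj sum.distrib[symmetric] by simp
  have R: "(\<Sum>k\<in>Z6_bob. Re (cnj (z k) * z k)) = (\<Sum>k\<in>Z6_bob. (Re (z k))^2) + (\<Sum>k\<in>Z6_bob. (Im (z k))^2)"
    unfolding re_cnj sum.distrib[symmetric] by simp
  have 1: "(\<Sum>x\<in>Z6_alice. (Re (z (fst x)) - Re (z (snd x)))^2) \<le> 6 * (\<Sum>k\<in>Z6_bob. (Re (z k))^2)"
    unfolding Z6_alice_eq Z6_bob_eq using six_le[of "Re (z 1)" "Re (z 2)" "Re (z 3)" "Re (z 4)" "Re (z 5)" "Re (z 6)"]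
    by (simp add: add.assoc)
  have 2: "(\<Sum>x\<in>Z6_alice. (Im (z (fst x)) - Im (z (snd x)))^2) \<le> 6 * (\<Sum>k\<in>Z6_bob. (Im (z k))^2)"
    unfolding Z6_alice_eq Z6_bob_eq using six_le[of "Im (z 1)" "Im (z 2)" "Im (z 3)" "Im (z 4)" "Im (z 5)" "Im (z 6)"]
    by (simp add: add.assoc)
  show ?thesis unfolding L R using 1 2 by simp
qed

lemma nrm2_q_obs:
  assumes "unit_vec_c (D*D) \<psi>" "observable D B"
  shows "nrm2 D (qC D B \<psi>) = 1"
proof -
  have psi: "\<psi> \<in> carrier_vec (D*D)" "map_vec cnj \<psi> \<bullet> \<psi> = 1" using assms(1) unfolding unit_vec_c_def by auto
  have "nrm2 D (qC D B \<psi>) = Re (\<Sum>a<D. \<Sum>b<D. cnj (qC D B \<psi> a b) * qC D B \<psi> a b)"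
    unfolding nrm2_def by (simp only: Re_sum)
  also have "\<dots> = 1"
    using norm_q[of D B 1 \<psi>, OF obs_orth[OF assms(2)]] norm_psi[OF psi(1)] psi(2) by simp
  finally show ?thesis .
qed

lemma swap_pairs:
  "(\<Sum>x\<in>X. nrm2 D (F x)) = (\<Sum>a<D. \<Sum>b<D. \<Sum>x\<in>X. Re (cnj (F x a b) * F x a b))"
  unfolding nrm2_def
  by (subst sum.swap) (rule sum.cong[OF refl], rule sum.swap)

lemma quantum_bound:
  assumes u: "unit_vec_c (D*D) \<psi>" and A: "\<forall>x\<in>Z6_alice. observable D (A x)" and B: "\<forall>y\<in>Z6_bob. observable D (B y)"
  shows "Re (\<Sum>x\<in>Z6_alice. \<Sum>y\<in>Z6_bob. complex_of_real (Z6_M x y) * expval \<psi> (kron (A x) (B y))) \<le> 6 * sqrt 15"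
proof -
  have psi: "\<psi> \<in> carrier_vec (D*D)" "map_vec cnj \<psi> \<bullet> \<psi> = 1" using u unfolding unit_vec_c_def by auto
  define L :: real where "L = 6 / sqrt 15"
  have L0: "L > 0" unfolding L_def by simp
  define N where "N x = nrm2 D (\<lambda>a b. qC D (B (fst x)) \<psi> a b - qC D (B (snd x)) \<psi> a b)" for x
  have fs: "fst x \<in> Z6_bob" "snd x \<in> Z6_bob" if "x \<in> Z6_alice" for x
    using that unfolding Z6_alice_def Z6_bob_def by auto
  have "Re (\<Sum>x\<in>Z6_alice. \<Sum>y\<in>Z6_bob. complex_of_real (Z6_M x y) * expval \<psi> (kron (A x) (B y)))
      = (\<Sum>x\<in>Z6_alice. Re (expval \<psi> (kron (A x) (B (fst x))) - expval \<psi> (kron (A x) (B (snd x)))))"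
  proof -
    have "(\<Sum>x\<in>Z6_alice. \<Sum>y\<in>Z6_bob. complex_of_real (Z6_M x y) * expval \<psi> (kron (A x) (B y)))
      = (\<Sum>x\<in>Z6_alice. expval \<psi> (kron (A x) (B (fst x))) - expval \<psi> (kron (A x) (B (snd x))))"
      by (intro sum.cong refl sumM_gen[where F="\<lambda>y. expval \<psi> (kron (A x) (B y))" for x, simplified])
    then show ?thesis by (simp only: Re_sum)
  qed
  also have "\<dots> \<le> (\<Sum>x\<in>Z6_alice. (L * 1 + N x / L) / 2)"
  proof (rule sum_mono)
    fix x assume x: "x \<in> Z6_alice"
    have oA: "observable D (A x)" using A x by auto
    have o1: "observable D (B (fst x))" "observable D (B (snd x))" using B fs[OF x] by auto
    show "Re (expval \<psi> (kron (A x) (B (fst x))) - expval \<psi> (kron (A x) (B (snd x)))) \<le> (L * 1 + N x / L) / 2"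
      using term_bound[OF psi(1) _ _ _ obs_herm[OF oA] obs_orth[OF oA] L0, of "B (fst x)" "B (snd x)"]
        oA o1 psi(2) unfolding N_def observable_def by simp
  qed
  also have "\<dots> = (15 * L + (\<Sum>x\<in>Z6_alice. N x) / L) / 2"
    by (simp add: sum_divide_distrib[symmetric] sum.distrib add_divide_distrib card_Z6)
  also have "(\<Sum>x\<in>Z6_alice. N x) \<le> 36"
  proof -
    have "(\<Sum>x\<in>Z6_alice. N x) = (\<Sum>a<D. \<Sum>b<D. \<Sum>x\<in>Z6_alice.
        Re (cnj (qC D (B (fst x)) \<psi> a b - qC D (B (snd x)) \<psi> a b) * (qC D (B (fst x)) \<psi> a b - qC D (B (snd x)) \<psi> a b)))"
      unfolding N_def by (rule swap_pairs)
    also have "\<dots> \<le> (\<Sum>a<D. \<Sum>b<D. 6 * (\<Sum>k\<in>Z6_bob. Re (cnj (qC D (B k) \<psi> a b) * qC D (B k) \<psi> a b)))"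
    proof (intro sum_mono)
      fix a b show "(\<Sum>x\<in>Z6_alice. Re (cnj (qC D (B (fst x)) \<psi> a b - qC D (B (snd x)) \<psi> a b) *
                     (qC D (B (fst x)) \<psi> a b - qC D (B (snd x)) \<psi> a b)))
              \<le> 6 * (\<Sum>k\<in>Z6_bob. Re (cnj (qC D (B k) \<psi> a b) * qC D (B k) \<psi> a b))"
        by (rule pointwise6[of "\<lambda>k. qC D (B k) \<psi> a b"])
    qed
    also have "\<dots> = 6 * (\<Sum>k\<in>Z6_bob. nrm2 D (qC D (B k) \<psi>))"
      unfolding nrm2_def sum_distrib_left[symmetric]
      by (simp only: sum_distrib_left) (subst sum.swap, rule sum.cong[OF refl], subst sum.swap, rule refl)
    also have "\<dots> = 36" using nrm2_q_obs[OF u] B by (simp add: Z6_bob_def)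
    finally show ?thesis .
  qed
  then have "(15 * L + (\<Sum>x\<in>Z6_alice. N x) / L) / 2 \<le> (15 * L + 36 / L) / 2"
    using L0 by (simp add: divide_right_mono)
  also have "\<dots> = 6 * sqrt 15"
  proof -
    have s: "sqrt 15 * sqrt 15 = 15" by simp
    have "15 * L = 6 * sqrt 15" unfolding L_def using s by (simp add: field_simps)
    moreover have "36 / L = 6 * sqrt 15" unfolding L_def using s by (simp add: field_simps)
    ultimately show ?thesis by simp
  qed
  finally show ?thesis by simp
qed


definition gg :: "real \<Rightarrow> real" where
  "gg t = sqrt 2 - (sqrt 2 / 2) * t + (2 - 3 * sqrt 2 / 2) * t^2"

lemma s2_bounds: "1.4 < sqrt (2::real)" "sqrt (2::real) < 1.5"
proof -
  have "1.4 < sqrt (2::real)" by (rule real_less_rsqrt) (simp add: power_divide)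
  moreover have "sqrt (2::real) < 1.5" by (rule real_less_lsqrt) (simp_all add: power_divide)
  ultimately show "1.4 < sqrt (2::real)" "sqrt (2::real) < 1.5" by auto
qed

lemma gg_pos: assumes "-1 \<le> t" "t \<le> 1" shows "gg t > 0"
proof -
  let ?s = "sqrt (2::real)"
  have "t^2 \<le> 1" using assms by (simp add: abs_square_le_1)
  moreover have "2 - 3 * ?s / 2 < 0" using s2_bounds by simp
  ultimately have "(2 - 3 * ?s / 2) * t^2 \<ge> (2 - 3 * ?s / 2)"
    by (simp add: mult_le_cancel_left2)
  moreover have "(?s / 2) * t \<le> ?s / 2" using assms by simp
  ultimately show ?thesis unfolding gg_def using s2_bounds by linarith
qed

lemma gg_sq: assumes "-1 \<le> t" "t \<le> 1" shows "2 - 2*t \<le> (gg t)^2"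
proof -
  define s where "s = sqrt (2::real)"
  define c where "c = 2 - 3 * s / 2"
  have ss: "s * s = 2" unfolding s_def by simp
  have id0: "(gg t)^2 - (2 - 2*t) - t^2 * ((t+1) * (c^2 * (t-1) + 3 - 2 * s)) = (s*s - 2) * (1 - t - t^2/2 + 3/2 * t^3)"
    unfolding gg_def s_def[symmetric] c_def by (simp add: power2_eq_square power3_eq_cube field_simps)
  have id: "(gg t)^2 - (2 - 2*t) = t^2 * ((t+1) * (c^2 * (t-1) + 3 - 2 * s))"
    using id0 ss by simp
  have c20: "c^2 = 17/2 - 6 * s + 9/4 * (s * s - 2)" unfolding c_def by (simp add: power2_eq_square field_simps)
  have c2: "c^2 = 17/2 - 6 * s" using c20 ss by simp
  have A: "c^2 * (t-1) \<ge> c^2 * (-2)" using assms by (intro mult_left_mono) auto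
  have "c^2 * (t-1) + 3 - 2 * s \<ge> 0" using A c2 s2_bounds unfolding s_def[symmetric] by linarith
  then have "0 \<le> t^2 * ((t+1) * (c^2 * (t-1) + 3 - 2 * s))" using assms by simp
  then show ?thesis using id by linarith
qed

definition TT :: "(nat \<Rightarrow> nat \<Rightarrow> real) \<Rightarrow> nat \<Rightarrow> nat \<Rightarrow> real" where
  "TT p i j = (\<Sum>a<3. p i a * p j a)"

lemma TT_sym: "TT p i j = TT p j i" unfolding TT_def by (simp add: mult.commute)

lemma dbl1: "(\<Sum>i\<in>K. \<Sum>j\<in>K. TT p i j) = (\<Sum>a<3. (\<Sum>i\<in>K. p i a)^2)"
proof -
  have "(\<Sum>i\<in>K. \<Sum>j\<in>K. TT p i j) = (\<Sum>i\<in>K. \<Sum>j\<in>K. \<Sum>a<3. p i a * p j a)" unfolding TT_def ..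
  also have "\<dots> = (\<Sum>i\<in>K. \<Sum>a<3. \<Sum>j\<in>K. p i a * p j a)" by (intro sum.cong refl sum.swap)
  also have "\<dots> = (\<Sum>a<3. \<Sum>i\<in>K. \<Sum>j\<in>K. p i a * p j a)" by (rule sum.swap)
  also have "\<dots> = (\<Sum>a<3. (\<Sum>i\<in>K. p i a)^2)" by (simp add: power2_eq_square sum_product)
  finally show ?thesis .
qed

lemma dbl2: "(\<Sum>i\<in>K. \<Sum>j\<in>K. (TT p i j)^2) = (\<Sum>a<3. \<Sum>c<3. (\<Sum>i\<in>K. p i a * p i c)^2)"
proof -
  have "(\<Sum>i\<in>K. \<Sum>j\<in>K. (TT p i j)^2) = (\<Sum>i\<in>K. \<Sum>j\<in>K. \<Sum>a<3. \<Sum>c<3. (p i a * p i c) * (p j a * p j c))"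
    unfolding TT_def power2_eq_square sum_product by (intro sum.cong refl) (simp add: mult_ac)
  also have "\<dots> = (\<Sum>i\<in>K. \<Sum>a<3. \<Sum>j\<in>K. \<Sum>c<3. (p i a * p i c) * (p j a * p j c))" by (intro sum.cong refl sum.swap)
  also have "\<dots> = (\<Sum>i\<in>K. \<Sum>a<3. \<Sum>c<3. \<Sum>j\<in>K. (p i a * p i c) * (p j a * p j c))" by (intro sum.cong refl sum.swap)
  also have "\<dots> = (\<Sum>a<3. \<Sum>i\<in>K. \<Sum>c<3. \<Sum>j\<in>K. (p i a * p i c) * (p j a * p j c))" by (rule sum.swap)
  also have "\<dots> = (\<Sum>a<3. \<Sum>c<3. \<Sum>i\<in>K. \<Sum>j\<in>K. (p i a * p i c) * (p j a * p j c))" by (intro sum.cong refl sum.swap)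
  also have "\<dots> = (\<Sum>a<3. \<Sum>c<3. (\<Sum>i\<in>K. p i a * p i c)^2)" by (simp add: power2_eq_square sum_product)
  finally show ?thesis .
qed

lemma split6:
  fixes f :: "nat \<Rightarrow> nat \<Rightarrow> real"
  assumes sym: "\<And>i j. f i j = f j i"
  shows "(\<Sum>i\<in>Z6_bob. \<Sum>j\<in>Z6_bob. f i j) = (\<Sum>i\<in>Z6_bob. f i i) + 2 * (\<Sum>x\<in>Z6_alice. f (fst x) (snd x))"
  unfolding Z6_bob_eq Z6_alice_eq
  using sym[of 2 1] sym[of 3 1] sym[of 4 1] sym[of 5 1] sym[of 6 1] sym[of 3 2] sym[of 4 2] sym[of 5 2] sym[of 6 2]
    sym[of 4 3] sym[of 5 3] sym[of 6 3] sym[of 5 4] sym[of 6 4] sym[of 6 5]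
  by simp

lemma sum3: "(\<Sum>a<3::nat. f a) = f 0 + f 1 + f 2" by (simp add: eval_nat_numeral)

lemma geo_main:
  assumes unit: "\<And>k. k \<in> Z6_bob \<Longrightarrow> (\<Sum>a<3. (p k a)^2) = 1"
  shows "(\<Sum>x\<in>Z6_alice. gg (TT p (fst x) (snd x))) \<le> 6 + 12 * sqrt 2"
proof -
  define P1 where "P1 = (\<Sum>x\<in>Z6_alice. TT p (fst x) (snd x))"
  define P2 where "P2 = (\<Sum>x\<in>Z6_alice. (TT p (fst x) (snd x))^2)"
  have diag: "TT p k k = 1" if "k \<in> Z6_bob" for k using unit[OF that] unfolding TT_def by (simp add: power2_eq_square)
  have P1: "P1 \<ge> -3"
  proof -
    have "(\<Sum>i\<in>Z6_bob. \<Sum>j\<in>Z6_bob. TT p i j) = 6 + 2 * P1"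
      unfolding split6[of "TT p", OF TT_sym] P1_def using diag by (simp add: Z6_bob_def)
    moreover have "(\<Sum>i\<in>Z6_bob. \<Sum>j\<in>Z6_bob. TT p i j) \<ge> 0" unfolding dbl1 by (intro sum_nonneg) simp
    ultimately show ?thesis by simp
  qed
  have P2: "P2 \<ge> 3"
  proof -
    let ?M = "\<lambda>a c. (\<Sum>i\<in>Z6_bob. p i a * p i c)"
    have "(\<Sum>i\<in>Z6_bob. \<Sum>j\<in>Z6_bob. (TT p i j)^2) = 6 + 2 * P2"
      unfolding split6[of "\<lambda>i j. (TT p i j)^2", OF arg_cong[where f="\<lambda>z. z^2", OF TT_sym]] P2_def
      using diag by (simp add: Z6_bob_def)
    moreover have "(\<Sum>i\<in>Z6_bob. \<Sum>j\<in>Z6_bob. (TT p i j)^2) \<ge> (?M 0 0)^2 + (?M 1 1)^2 + (?M 2 2)^2"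
      unfolding dbl2 sum3 by simp
    moreover have "?M 0 0 + ?M 1 1 + ?M 2 2 = 6"
    proof -
      have "?M 0 0 + ?M 1 1 + ?M 2 2 = (\<Sum>i\<in>Z6_bob. (\<Sum>a<3. (p i a)^2))"
        by (simp add: sum3 sum.distrib power2_eq_square)
      also have "\<dots> = 6" using unit by (simp add: Z6_bob_def)
      finally show ?thesis .
    qed
    moreover have sq3: "(x + y + z)^2 \<le> 3 * (x^2 + y^2 + z^2)" for x y z :: real
    proof -
      have "3 * (x^2 + y^2 + z^2) - (x + y + z)^2 = (x-y)^2 + (y-z)^2 + (x-z)^2"
        by (simp add: power2_eq_square algebra_simps)
      moreover have "(x-y)^2 + (y-z)^2 + (x-z)^2 \<ge> 0" by simp
      ultimately show ?thesis by linarith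
    qed
    ultimately show ?thesis using sq3[of "?M 0 0" "?M 1 1" "?M 2 2"] by simp
  qed
  have "(\<Sum>x\<in>Z6_alice. gg (TT p (fst x) (snd x))) = 15 * sqrt 2 - (sqrt 2 / 2) * P1 + (2 - 3 * sqrt 2 / 2) * P2"
    unfolding gg_def P1_def P2_def by (simp add: sum.distrib sum_subtractf sum_distrib_left card_Z6)
  also have "\<dots> \<le> 15 * sqrt 2 - (sqrt 2 / 2) * (-3) + (2 - 3 * sqrt 2 / 2) * 3"
  proof -
    have "(sqrt 2 / 2) * (-3) \<le> (sqrt 2 / 2) * P1" using P1 by (intro mult_left_mono) auto
    moreover have "(2 - 3 * sqrt 2 / 2) * P2 \<le> (2 - 3 * sqrt 2 / 2) * 3"
      using P2 s2_bounds by (intro mult_left_mono_neg) auto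
    ultimately show ?thesis by linarith
  qed
  also have "\<dots> = 6 + 12 * sqrt 2" by simp
  finally show ?thesis .
qed


definition vv :: "nat \<Rightarrow> nat \<Rightarrow> real" where
  "vv k m = (if k = 6 then 1 else (if m + 1 = k then sqrt 6 else 0) - (1 + sqrt 6)/5) / sqrt 5"

lemma r16: "(k::nat) \<in> {1..6} \<Longrightarrow> k = 1 \<or> k = 2 \<or> k = 3 \<or> k = 4 \<or> k = 5 \<or> k = 6" by auto

lemma s6: "sqrt 6 * sqrt 6 = (6::real)" by simp
lemma s5: "sqrt 5 * sqrt 5 = (5::real)" by simp

lemma vv_norm: "k \<in> {1..6} \<Longrightarrow> sq5 (vv k) = 1"
  apply (drule r16)
  apply (elim disjE)
  apply (simp_all add: sq5_def vv_def power_divide power2_eq_square field_simps s6)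
  done

lemma vv_dist: "i \<in> {1..6} \<Longrightarrow> j \<in> {1..6} \<Longrightarrow> i \<noteq> j \<Longrightarrow> sq5 (\<lambda>m. vv i m - vv j m) = 12/5"
  apply (drule r16)+
  apply (elim disjE)
  apply (simp_all add: sq5_def vv_def power_divide power2_eq_square field_simps s6)
  done


definition rr :: real where "rr = sqrt (12/5)"
definition Bq :: "nat \<Rightarrow> complex mat" where "Bq k = G (vv k)"
definition Aq :: "nat \<times> nat \<Rightarrow> complex mat" where "Aq x = H (\<lambda>m. (vv (fst x) m - vv (snd x) m) / rr)"

lemma rr_sq: "rr * rr = 12/5" unfolding rr_def by simp
lemma rr_pos: "rr > 0" unfolding rr_def by simp

lemma psi4_carrier: "psi_max4 \<in> carrier_vec (4*4)" unfolding psi_max4_def by simp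
lemma psi4_ent: "a < 4 \<Longrightarrow> b < 4 \<Longrightarrow> psi_max4 $ (a*4+b) = (if a = b then 1/2 else 0)"
proof -
  assume "a < 4" "b < 4"
  then have "a*4+b < 16" by arith
  then show ?thesis using \<open>b<4\<close> unfolding psi_max4_def by simp
qed
lemma psi4_unit: "unit_vec_c (4*4) psi_max4"
proof -
  have "map_vec cnj psi_max4 \<bullet> psi_max4 = (\<Sum>a<4. \<Sum>b<4. cnj (psi_max4$(a*4+b)) * psi_max4$(a*4+b))"
    by (rule norm_psi[OF psi4_carrier])
  also have "\<dots> = 1" by (simp add: sum4' psi4_ent)
  finally show ?thesis unfolding unit_vec_c_def using psi4_carrier by simp
qed

lemma Bq_obs: "k \<in> Z6_bob \<Longrightarrow> observable 4 (Bq k)"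
  unfolding Bq_def Z6_bob_def by (rule G_obs, rule vv_norm)

lemma fs6: "x \<in> Z6_alice \<Longrightarrow> fst x \<in> {1..6} \<and> snd x \<in> {1..6} \<and> fst x \<noteq> snd x"
  unfolding Z6_alice_def by auto

lemma sq5_scale: "sq5 (\<lambda>m. f m / c) = sq5 f / (c*c)"
  unfolding sq5_def by (simp add: power_divide power2_eq_square add_divide_distrib)

lemma Aq_obs: "x \<in> Z6_alice \<Longrightarrow> observable 4 (Aq x)"
  unfolding Aq_def using fs6[of x] vv_dist[of "fst x" "snd x"]
  by (intro H_obs) (simp add: sq5_scale rr_sq)

lemma pair_val:
  assumes x: "x \<in> Z6_alice"
  shows "expval psi_max4 (kron (Aq x) (Bq (fst x))) - expval psi_max4 (kron (Aq x) (Bq (snd x))) = complex_of_real rr"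
proof -
  let ?d = "\<lambda>m. vv (fst x) m - vv (snd x) m"
  have cA: "Aq x \<in> carrier_mat 4 4" "Bq (fst x) \<in> carrier_mat 4 4" "Bq (snd x) \<in> carrier_mat 4 4"
    by (auto simp: Aq_def Bq_def H_def G_def)
  have "expval psi_max4 (kron (Aq x) (Bq (fst x))) - expval psi_max4 (kron (Aq x) (Bq (snd x)))
     = cnj (1/2) * (1/2) * ((\<Sum>a<4. \<Sum>c<4. Aq x $$(a,c) * Bq (fst x) $$(a,c)) - (\<Sum>a<4. \<Sum>c<4. Aq x $$(a,c) * Bq (snd x) $$(a,c)))"
  proof -
    have e1: "expval psi_max4 (kron (Aq x) (Bq (fst x))) = cnj (1/2) * (1/2) * (\<Sum>a<4. \<Sum>c<4. Aq x $$(a,c) * Bq (fst x) $$(a,c))"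
      by (rule expval_maxent[OF psi4_carrier cA(1) cA(2) psi4_ent])
    have e2: "expval psi_max4 (kron (Aq x) (Bq (snd x))) = cnj (1/2) * (1/2) * (\<Sum>a<4. \<Sum>c<4. Aq x $$(a,c) * Bq (snd x) $$(a,c))"
      by (rule expval_maxent[OF psi4_carrier cA(1) cA(3) psi4_ent])
    show ?thesis by (simp only: e1 e2 right_diff_distrib)
  qed
  also have "(\<Sum>a<4. \<Sum>c<4. Aq x $$(a,c) * Bq (fst x) $$(a,c)) - (\<Sum>a<4. \<Sum>c<4. Aq x $$(a,c) * Bq (snd x) $$(a,c))
      = (\<Sum>a<4. \<Sum>c<4. H (\<lambda>m. ?d m / rr) $$(a,c) * G ?d $$(a,c))"
    unfolding sum_subtractf[symmetric]
    by (intro sum.cong refl) (simp add: Aq_def Bq_def G_diff[symmetric] right_diff_distrib)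
  also have "\<dots> = 4 * complex_of_real (sq5 ?d / rr)"
    unfolding HG_trace sq5_def by (simp add: power2_eq_square add_divide_distrib)
  also have "sq5 ?d = 12/5" using fs6[OF x] vv_dist[of "fst x" "snd x"] by simp
  finally have f: "expval psi_max4 (kron (Aq x) (Bq (fst x))) - expval psi_max4 (kron (Aq x) (Bq (snd x))) =
    cnj (1/2) * (1/2) * (4 * complex_of_real ((12/5) / rr))" .
  have "(12/5) / rr = rr" using rr_sq rr_pos by (simp add: field_simps)
  then show ?thesis unfolding f by simp
qed

lemma quantum_witness:
  "Re (\<Sum>x\<in>Z6_alice. \<Sum>y\<in>Z6_bob. complex_of_real (Z6_M x y) * expval psi_max4 (kron (Aq x) (Bq y))) = 6 * sqrt 15"
proof -
  have "(\<Sum>x\<in>Z6_alice. \<Sum>y\<in>Z6_bob. complex_of_real (Z6_M x y) * expval psi_max4 (kron (Aq x) (Bq y)))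
      = (\<Sum>x\<in>Z6_alice. complex_of_real rr)"
    by (intro sum.cong refl) (simp add: sumM_gen[where F="\<lambda>y. expval psi_max4 (kron (Aq _) (Bq y))"] pair_val)
  also have "\<dots> = complex_of_real (15 * rr)" by (simp add: card_Z6)
  finally have e: "(\<Sum>x\<in>Z6_alice. \<Sum>y\<in>Z6_bob. complex_of_real (Z6_M x y) * expval psi_max4 (kron (Aq x) (Bq y))) = complex_of_real (15 * rr)" .
  have "15 * rr = 6 * sqrt 15"
  proof -
    have "rr = (6/15) * sqrt 15" unfolding rr_def
      by (rule real_sqrt_unique) (auto simp: power_mult_distrib power_divide)
    then show ?thesis by simp
  qed
  then show ?thesis unfolding e by simp
qed


definition c1 :: "real \<times> real \<times> real \<Rightarrow> real" where "c1 v = fst v"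
definition c2 :: "real \<times> real \<times> real \<Rightarrow> real" where "c2 v = fst (snd v)"
definition c3 :: "real \<times> real \<times> real \<Rightarrow> real" where "c3 v = snd (snd v)"
definition crd :: "real \<times> real \<times> real \<Rightarrow> nat \<Rightarrow> real" where
  "crd v a = (if a = 0 then c1 v else if a = 1 then c2 v else c3 v)"
definition vsub :: "real \<times> real \<times> real \<Rightarrow> real \<times> real \<times> real \<Rightarrow> real \<times> real \<times> real" where
  "vsub u w = (c1 u - c1 w, c2 u - c2 w, c3 u - c3 w)"
definition nsq :: "real \<times> real \<times> real \<Rightarrow> real" where
  "nsq v = (c1 v)^2 + (c2 v)^2 + (c3 v)^2"
definition dot3 :: "real \<times> real \<times> real \<Rightarrow> real \<times> real \<times> real \<Rightarrow> real" where
  "dot3 u v = c1 u * c1 v + c2 u * c2 v + c3 u * c3 v"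

lemma on_S2_nsq: "on_S2 v \<longleftrightarrow> nsq v = 1"
  unfolding on_S2_def nsq_def c1_def c2_def c3_def by (cases v) auto

lemma lt2: "(i::nat) < 2 \<Longrightarrow> i = 0 \<or> i = 1" by arith
lemma sum2': "(\<Sum>k<2::nat. f k) = f 0 + f 1" by (simp add: eval_nat_numeral)
lemma sum2: "(\<Sum>k\<in>{0..<2::nat}. f k) = f 0 + f 1" by (simp add: eval_nat_numeral)

lemma ds_car: "dot_sigma v \<in> carrier_mat 2 2" "dot_sigmaT v \<in> carrier_mat 2 2"
  by (cases v, simp add: dot_sigma_def dot_sigmaT_def sigma_x_def sigma_y_def sigma_z_def)+

lemma ds_ent:
  "dot_sigma v $$ (0,0) = of_real (c3 v)"
  "dot_sigma v $$ (0,1) = of_real (c1 v) - \<i> * of_real (c2 v)"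
  "dot_sigma v $$ (1,0) = of_real (c1 v) + \<i> * of_real (c2 v)"
  "dot_sigma v $$ (1,1) = - of_real (c3 v)"
  "dot_sigmaT v $$ (0,0) = of_real (c3 v)"
  "dot_sigmaT v $$ (0,1) = of_real (c1 v) + \<i> * of_real (c2 v)"
  "dot_sigmaT v $$ (1,0) = of_real (c1 v) - \<i> * of_real (c2 v)"
  "dot_sigmaT v $$ (1,1) = - of_real (c3 v)"
  by (cases v, simp add: dot_sigma_def dot_sigmaT_def sigma_x_def sigma_y_def sigma_z_def c1_def c2_def c3_def)+

lemmas ds_ent1 = ds_ent[unfolded One_nat_def]

lemma ds_herm: "i < 2 \<Longrightarrow> j < 2 \<Longrightarrow> dot_sigma v $$ (j,i) = cnj (dot_sigma v $$ (i,j))"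
  by (drule lt2, drule lt2, elim disjE) (simp_all add: ds_ent ds_ent1)
lemma dsT_herm: "i < 2 \<Longrightarrow> j < 2 \<Longrightarrow> dot_sigmaT v $$ (j,i) = cnj (dot_sigmaT v $$ (i,j))"
  by (drule lt2, drule lt2, elim disjE) (simp_all add: ds_ent ds_ent1)

lemma ds_orth: "d < 2 \<Longrightarrow> d' < 2 \<Longrightarrow> (\<Sum>b<2. cnj (dot_sigma v $$ (b,d)) * dot_sigma v $$ (b,d')) = (if d = d' then complex_of_real (nsq v) else 0)"
  by (drule lt2, drule lt2, elim disjE) (simp_all add: ds_ent ds_ent1 sum2' nsq_def complex_eq_iff power2_eq_square algebra_simps)
lemma dsT_orth: "d < 2 \<Longrightarrow> d' < 2 \<Longrightarrow> (\<Sum>b<2. cnj (dot_sigmaT v $$ (b,d)) * dot_sigmaT v $$ (b,d')) = (if d = d' then complex_of_real (nsq v) else 0)"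
  by (drule lt2, drule lt2, elim disjE) (simp_all add: ds_ent ds_ent1 sum2' nsq_def complex_eq_iff power2_eq_square algebra_simps)

lemma dsT_lin: "i < 2 \<Longrightarrow> j < 2 \<Longrightarrow> dot_sigmaT u $$ (i,j) - dot_sigmaT w $$ (i,j) = dot_sigmaT (vsub u w) $$ (i,j)"
  by (drule lt2, drule lt2, elim disjE) (simp_all add: ds_ent ds_ent1 vsub_def c1_def c2_def c3_def complex_eq_iff)

lemma qC_lin: "b < 2 \<Longrightarrow> qC 2 (dot_sigmaT u) \<psi> a b - qC 2 (dot_sigmaT w) \<psi> a b = qC 2 (dot_sigmaT (vsub u w)) \<psi> a b"
  unfolding qC_def sum_subtractf[symmetric]
  by (intro sum.cong refl) (simp add: dsT_lin[symmetric] left_diff_distrib)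

lemma nrm2_cong: "(\<And>a b. a < D \<Longrightarrow> b < D \<Longrightarrow> f a b = g a b) \<Longrightarrow> nrm2 D f = nrm2 D g"
  unfolding nrm2_def by (intro sum.cong refl) auto

lemma nrm2_dsT:
  assumes "unit_vec_c (2*2) \<psi>"
  shows "nrm2 2 (qC 2 (dot_sigmaT d) \<psi>) = nsq d"
proof -
  have psi: "\<psi> \<in> carrier_vec (2*2)" "map_vec cnj \<psi> \<bullet> \<psi> = 1" using assms unfolding unit_vec_c_def by auto
  have "nrm2 2 (qC 2 (dot_sigmaT d) \<psi>) = Re (\<Sum>a<2. \<Sum>b<2. cnj (qC 2 (dot_sigmaT d) \<psi> a b) * qC 2 (dot_sigmaT d) \<psi> a b)"
    unfolding nrm2_def by (simp only: Re_sum)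
  also have "\<dots> = nsq d"
    using norm_q[of 2 "dot_sigmaT d" "complex_of_real (nsq d)" \<psi>, OF dsT_orth] norm_psi[OF psi(1)] psi(2) by simp
  finally show ?thesis .
qed

lemma nsq_vsub: "nsq (vsub u w) = nsq u + nsq w - 2 * dot3 u w"
  unfolding nsq_def vsub_def dot3_def c1_def c2_def c3_def by (simp add: power2_eq_square algebra_simps)

lemma dot3_bounds: assumes "nsq u = 1" "nsq w = 1" shows "-1 \<le> dot3 u w" "dot3 u w \<le> 1"
proof -
  have "0 \<le> (c1 u + c1 w)^2 + (c2 u + c2 w)^2 + (c3 u + c3 w)^2" by simp
  moreover have "(c1 u + c1 w)^2 + (c2 u + c2 w)^2 + (c3 u + c3 w)^2 = nsq u + nsq w + 2 * dot3 u w"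
    unfolding nsq_def dot3_def by (simp add: power2_eq_square algebra_simps)
  ultimately show "-1 \<le> dot3 u w" using assms by simp
  have "0 \<le> nsq (vsub u w)" unfolding nsq_def by simp
  then show "dot3 u w \<le> 1" using assms nsq_vsub[of u w] by simp
qed

lemma dot3_TT: "dot3 u w = TT (\<lambda>k a. crd (if k = 0 then u else w) a) 0 1"
  unfolding TT_def dot3_def crd_def by (simp add: sum3)

lemma geo_b:
  assumes "\<forall>y\<in>Z6_bob. nsq (b y) = 1"
  shows "(\<Sum>x\<in>Z6_alice. gg (dot3 (b (fst x)) (b (snd x)))) \<le> 6 + 12 * sqrt 2"
proof -
  have "dot3 (b i) (b j) = TT (\<lambda>k a. crd (b k) a) i j" for i j
    unfolding TT_def dot3_def crd_def by (simp add: sum3)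
  moreover have "(\<Sum>a<3. (crd (b k) a)^2) = 1" if "k \<in> Z6_bob" for k
    using assms that unfolding nsq_def crd_def by (simp add: sum3)
  ultimately show ?thesis using geo_main[of "\<lambda>k a. crd (b k) a"] by simp
qed


lemma half_le: assumes "g > 0" "N \<le> g^2" shows "(g * 1 + N / g) / 2 \<le> (g::real)"
proof -
  have "N / g \<le> g" using assms by (simp add: divide_le_eq power2_eq_square)
  then show ?thesis by simp
qed

lemma qubit_bound:
  assumes u: "unit_vec_c 4 \<psi>" and a: "\<forall>x\<in>Z6_alice. on_S2 (a x)" and b: "\<forall>y\<in>Z6_bob. on_S2 (b y)"
  shows "Re (\<Sum>x\<in>Z6_alice. \<Sum>y\<in>Z6_bob. complex_of_real (Z6_M x y) *
        expval \<psi> (kron (dot_sigma (a x)) (dot_sigmaT (b y)))) \<le> 6 * (1 + 2 * sqrt 2)"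
proof -
  have u': "unit_vec_c (2*2) \<psi>" using u by simp
  have psi: "\<psi> \<in> carrier_vec (2*2)" "map_vec cnj \<psi> \<bullet> \<psi> = 1" using u' unfolding unit_vec_c_def by auto
  have bn: "\<forall>y\<in>Z6_bob. nsq (b y) = 1" using b by (simp add: on_S2_nsq)
  have fs: "fst x \<in> Z6_bob" "snd x \<in> Z6_bob" if "x \<in> Z6_alice" for x
    using that unfolding Z6_alice_def Z6_bob_def by auto
  have "(\<Sum>x\<in>Z6_alice. \<Sum>y\<in>Z6_bob. complex_of_real (Z6_M x y) * expval \<psi> (kron (dot_sigma (a x)) (dot_sigmaT (b y))))
      = (\<Sum>x\<in>Z6_alice. expval \<psi> (kron (dot_sigma (a x)) (dot_sigmaT (b (fst x)))) - expval \<psi> (kron (dot_sigma (a x)) (dot_sigmaT (b (snd x)))))"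
    by (intro sum.cong refl sumM_gen[where F="\<lambda>y. expval \<psi> (kron (dot_sigma (a x)) (dot_sigmaT (b y)))" for x, simplified])
  then have "Re (\<Sum>x\<in>Z6_alice. \<Sum>y\<in>Z6_bob. complex_of_real (Z6_M x y) * expval \<psi> (kron (dot_sigma (a x)) (dot_sigmaT (b y))))
      = (\<Sum>x\<in>Z6_alice. Re (expval \<psi> (kron (dot_sigma (a x)) (dot_sigmaT (b (fst x)))) - expval \<psi> (kron (dot_sigma (a x)) (dot_sigmaT (b (snd x))))))"
    by (simp only: Re_sum)
  also have "\<dots> \<le> (\<Sum>x\<in>Z6_alice. gg (dot3 (b (fst x)) (b (snd x))))"
  proof (rule sum_mono)
    fix x assume x: "x \<in> Z6_alice"
    let ?t = "dot3 (b (fst x)) (b (snd x))"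
    have n1: "nsq (b (fst x)) = 1" "nsq (b (snd x)) = 1" using bn fs[OF x] by auto
    have tb: "-1 \<le> ?t" "?t \<le> 1" using dot3_bounds[OF n1] by auto
    have g0: "gg ?t > 0" using gg_pos[OF tb] .
    have na: "nsq (a x) = 1" using a x by (simp add: on_S2_nsq)
    have orth: "(\<Sum>b<2. cnj (dot_sigma (a x) $$ (b,d)) * dot_sigma (a x) $$ (b,d')) = (if d = d' then 1 else 0)"
      if "d < 2" "d' < 2" for d d'
      using ds_orth[OF that, of "a x"] na by simp
    have "Re (expval \<psi> (kron (dot_sigma (a x)) (dot_sigmaT (b (fst x)))) - expval \<psi> (kron (dot_sigma (a x)) (dot_sigmaT (b (snd x)))))
       \<le> (gg ?t * Re (map_vec cnj \<psi> \<bullet> \<psi>) + nrm2 2 (\<lambda>a' b'. qC 2 (dot_sigmaT (b (fst x))) \<psi> a' b' - qC 2 (dot_sigmaT (b (snd x))) \<psi> a' b') / gg ?t) / 2"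
      by (rule term_bound[OF psi(1) ds_car(1) ds_car(2) ds_car(2) ds_herm orth g0])
    also have "nrm2 2 (\<lambda>a' b'. qC 2 (dot_sigmaT (b (fst x))) \<psi> a' b' - qC 2 (dot_sigmaT (b (snd x))) \<psi> a' b')
       = nrm2 2 (qC 2 (dot_sigmaT (vsub (b (fst x)) (b (snd x)))) \<psi>)"
      by (rule nrm2_cong) (simp add: qC_lin)
    also have "\<dots> = 2 - 2 * ?t" unfolding nrm2_dsT[OF u'] nsq_vsub n1 by simp
    finally have "Re (expval \<psi> (kron (dot_sigma (a x)) (dot_sigmaT (b (fst x)))) - expval \<psi> (kron (dot_sigma (a x)) (dot_sigmaT (b (snd x)))))
       \<le> (gg ?t * 1 + (2 - 2 * ?t) / gg ?t) / 2" using psi(2) by simp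
    also have "\<dots> \<le> gg ?t" by (rule half_le[OF g0 gg_sq[OF tb]])
    finally show "Re (expval \<psi> (kron (dot_sigma (a x)) (dot_sigmaT (b (fst x)))) - expval \<psi> (kron (dot_sigma (a x)) (dot_sigmaT (b (snd x)))))
       \<le> gg ?t" .
  qed
  also have "\<dots> \<le> 6 + 12 * sqrt 2" by (rule geo_b[OF bn])
  also have "\<dots> = 6 * (1 + 2 * sqrt 2)" by simp
  finally show ?thesis .
qed


definition psi2 :: "complex vec" where
  "psi2 = vec 4 (\<lambda>n. if n div 2 = n mod 2 then complex_of_real (1 / sqrt 2) else 0)"
definition ob :: "nat \<Rightarrow> real \<times> real \<times> real" where
  "ob k = (if k = 1 then (1,0,0) else if k = 2 then (-1,0,0) else if k = 3 then (0,1,0)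
     else if k = 4 then (0,-1,0) else if k = 5 then (0,0,1) else (0,0,-1))"
definition smul :: "real \<Rightarrow> real \<times> real \<times> real \<Rightarrow> real \<times> real \<times> real" where
  "smul r v = (r * c1 v, r * c2 v, r * c3 v)"
definition oa :: "nat \<times> nat \<Rightarrow> real \<times> real \<times> real" where
  "oa x = smul (1 / sqrt (nsq (vsub (ob (fst x)) (ob (snd x))))) (vsub (ob (fst x)) (ob (snd x)))"

lemma psi2_carrier: "psi2 \<in> carrier_vec (2*2)" unfolding psi2_def by simp
lemma psi2_ent: "a < 2 \<Longrightarrow> b < 2 \<Longrightarrow> psi2 $ (a*2+b) = (if a = b then complex_of_real (1 / sqrt 2) else 0)"
proof -
  assume "a < 2" "b < 2"
  then have "a*2+b < 4" by arith
  then show ?thesis using \<open>b<2\<close> unfolding psi2_def by simp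
qed
lemma k2: "cnj (complex_of_real (1 / sqrt 2)) * complex_of_real (1 / sqrt 2) = 1/2"
proof -
  have r: "(1 / sqrt 2) * (1 / sqrt 2) = (1/2::real)" by simp
  have "cnj (complex_of_real (1 / sqrt 2)) * complex_of_real (1 / sqrt 2) = complex_of_real ((1 / sqrt 2) * (1 / sqrt 2))"
    by (simp only: complex_cnj_complex_of_real of_real_mult)
  then show ?thesis unfolding r by simp
qed
lemma psi2_unit: "unit_vec_c 4 psi2"
proof -
  have "map_vec cnj psi2 \<bullet> psi2 = (\<Sum>a<2. \<Sum>b<2. cnj (psi2$(a*2+b)) * psi2$(a*2+b))"
    by (rule norm_psi[OF psi2_carrier])
  also have "\<dots> = 1" using k2 by (simp add: sum2' psi2_ent)
  finally show ?thesis unfolding unit_vec_c_def using psi2_carrier by simp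
qed

lemma ds_trace: "(\<Sum>i<2. \<Sum>j<2. dot_sigma u $$ (i,j) * dot_sigmaT w $$ (i,j)) = 2 * complex_of_real (dot3 u w)"
  by (simp add: sum2' ds_ent ds_ent1 dot3_def complex_eq_iff algebra_simps)

lemma E2: "expval psi2 (kron (dot_sigma u) (dot_sigmaT w)) = complex_of_real (dot3 u w)"
  using expval_maxent[OF psi2_carrier ds_car(1) ds_car(2) psi2_ent] k2 ds_trace by simp

lemma dot3_lin: "dot3 u w1 - dot3 u w2 = dot3 u (vsub w1 w2)"
  unfolding dot3_def vsub_def c1_def c2_def c3_def by (simp add: algebra_simps)
lemma dot3_smul: "dot3 (smul r d) d = r * nsq d"
  unfolding dot3_def smul_def nsq_def c1_def c2_def c3_def by (simp add: power2_eq_square algebra_simps)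
lemma nsq_smul: "nsq (smul r d) = r^2 * nsq d"
  unfolding smul_def nsq_def c1_def c2_def c3_def by (simp add: power_mult_distrib algebra_simps)

lemma ob_dist: "x \<in> Z6_alice \<Longrightarrow> nsq (vsub (ob (fst x)) (ob (snd x))) > 0"
  unfolding Z6_alice_eq by (auto simp: nsq_def vsub_def ob_def c1_def c2_def c3_def)

lemma oa_S2: "x \<in> Z6_alice \<Longrightarrow> on_S2 (oa x)"
proof -
  assume x: "x \<in> Z6_alice"
  let ?n = "nsq (vsub (ob (fst x)) (ob (snd x)))"
  have "?n > 0" using ob_dist[OF x] .
  then have "(1 / sqrt ?n)^2 * ?n = 1" by (simp add: power_divide)
  then show ?thesis unfolding on_S2_nsq oa_def nsq_smul by simp
qed

lemma ob_S2: "on_S2 (ob k)"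
  unfolding on_S2_def ob_def by auto

lemma oa_val: "x \<in> Z6_alice \<Longrightarrow> dot3 (oa x) (ob (fst x)) - dot3 (oa x) (ob (snd x)) = sqrt (nsq (vsub (ob (fst x)) (ob (snd x))))"
proof -
  assume x: "x \<in> Z6_alice"
  let ?n = "nsq (vsub (ob (fst x)) (ob (snd x)))"
  have n: "?n > 0" using ob_dist[OF x] .
  have "dot3 (oa x) (ob (fst x)) - dot3 (oa x) (ob (snd x)) = (1 / sqrt ?n) * ?n"
    unfolding dot3_lin oa_def dot3_smul ..
  also have "\<dots> = sqrt ?n" using n by (simp add: field_simps real_sqrt_mult[symmetric] del: real_sqrt_mult)
  finally show ?thesis .
qed

lemma sqrt4: "sqrt 4 = (2::real)" by (rule real_sqrt_unique) simp_all

lemma oct_sum: "(\<Sum>x\<in>Z6_alice. sqrt (nsq (vsub (ob (fst x)) (ob (snd x))))) = 6 * (1 + 2 * sqrt 2)"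
  unfolding Z6_alice_eq by (simp add: nsq_def vsub_def ob_def c1_def c2_def c3_def sqrt4)

lemma qubit_attain: "6 * (1 + 2 * sqrt 2) \<in> qubit_values Z6_alice Z6_bob Z6_M"
proof -
  have "(\<Sum>x\<in>Z6_alice. \<Sum>y\<in>Z6_bob. complex_of_real (Z6_M x y) * expval psi2 (kron (dot_sigma (oa x)) (dot_sigmaT (ob y))))
      = (\<Sum>x\<in>Z6_alice. complex_of_real (sqrt (nsq (vsub (ob (fst x)) (ob (snd x))))))"
  proof (intro sum.cong refl)
    fix x assume x: "x \<in> Z6_alice"
    have "(\<Sum>y\<in>Z6_bob. complex_of_real (Z6_M x y) * expval psi2 (kron (dot_sigma (oa x)) (dot_sigmaT (ob y))))
       = expval psi2 (kron (dot_sigma (oa x)) (dot_sigmaT (ob (fst x)))) - expval psi2 (kron (dot_sigma (oa x)) (dot_sigmaT (ob (snd x))))"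
      by (rule sumM_gen[OF x, where F="\<lambda>y. expval psi2 (kron (dot_sigma (oa x)) (dot_sigmaT (ob y)))", simplified])
    also have "\<dots> = complex_of_real (dot3 (oa x) (ob (fst x)) - dot3 (oa x) (ob (snd x)))" unfolding E2 by simp
    also have "\<dots> = complex_of_real (sqrt (nsq (vsub (ob (fst x)) (ob (snd x)))))" using oa_val[OF x] by simp
    finally show "(\<Sum>y\<in>Z6_bob. complex_of_real (Z6_M x y) * expval psi2 (kron (dot_sigma (oa x)) (dot_sigmaT (ob y))))
       = complex_of_real (sqrt (nsq (vsub (ob (fst x)) (ob (snd x)))))" .
  qed
  also have "\<dots> = complex_of_real (6 * (1 + 2 * sqrt 2))" unfolding of_real_sum[symmetric] oct_sum ..
  finally have e: "Re (\<Sum>x\<in>Z6_alice. \<Sum>y\<in>Z6_bob. complex_of_real (Z6_M x y) * expval psi2 (kron (dot_sigma (oa x)) (dot_sigmaT (ob y))))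
      = 6 * (1 + 2 * sqrt 2)" by simp
  show ?thesis unfolding qubit_values_def mem_Collect_eq
    by (intro exI[of _ psi2] exI[of _ oa] exI[of _ ob] conjI) (use e psi2_unit oa_S2 ob_S2 in auto)
qed


lemma numerics:
  "(6 * sqrt 15) / (6 * (1 + 2 * sqrt 2)) = (sqrt 120 - sqrt 15) / 7 \<and> (sqrt 120 - sqrt 15) / 7 > (1::real)"
proof -
  define s where "s = sqrt (2::real)"
  define r where "r = sqrt (15::real)"
  have ss: "s * s = 2" unfolding s_def by simp
  have s120: "sqrt 120 = 2 * s * r"
  proof -
    have a: "sqrt ((4::real)*2*15) = sqrt 4 * sqrt 2 * sqrt 15" by (simp only: real_sqrt_mult)
    have b: "(4::real)*2*15 = 120" by simp
    have "sqrt (120::real) = sqrt 4 * sqrt 2 * sqrt 15" using a unfolding b .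
    then show ?thesis unfolding s_def r_def by (simp add: sqrt4)
  qed
  have s0: "s > 0" "r > 0" unfolding s_def r_def by auto
  have "1 + 2 * s > 0" using s0 by simp
  have e1: "(6 * r) / (6 * (1 + 2 * s)) = (2 * s * r - r) / 7"
  proof -
    have "7 * r = (2 * s * r - r) * (1 + 2 * s)" using ss by (simp add: algebra_simps)
    then show ?thesis using \<open>1 + 2 * s > 0\<close> by (simp add: field_simps)
  qed
  have sb: "1.414 < s" unfolding s_def by (rule real_less_rsqrt) (simp add: power_divide)
  have rb: "3.872 < r" unfolding r_def by (rule real_less_rsqrt) (simp add: power_divide)
  have "(2 * s - 1) * r > 1.828 * 3.872"
    using sb rb by (intro mult_strict_mono) auto
  then have "(2 * s * r - r) / 7 > 1" by (simp add: algebra_simps)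
  then show ?thesis using e1 unfolding s120 s_def[symmetric] r_def[symmetric] by simp
qed

theorem mainTheorem9:
  shows "classical_value Z6_alice Z6_bob Z6_M = 18
    \<and> quantum_value Z6_alice Z6_bob Z6_M = 6 * sqrt 15
    \<and> (\<exists>A B. (\<forall>x\<in>Z6_alice. observable 4 (A x)) \<and> (\<forall>y\<in>Z6_bob. observable 4 (B y)) \<and>
           Re (\<Sum>x\<in>Z6_alice. \<Sum>y\<in>Z6_bob. complex_of_real (Z6_M x y) * expval psi_max4 (kron (A x) (B y)))
             = 6 * sqrt 15)
    \<and> 6 * (1 + 2 * sqrt 2) \<in> qubit_values Z6_alice Z6_bob Z6_M
    \<and> (\<forall>v\<in>qubit_values Z6_alice Z6_bob Z6_M. v \<le> 6 * (1 + 2 * sqrt 2))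
    \<and> (6 * sqrt 15) / (6 * (1 + 2 * sqrt 2)) = (sqrt 120 - sqrt 15) / 7
    \<and> (sqrt 120 - sqrt 15) / 7 > 1"
proof -
  have obsA: "\<forall>x\<in>Z6_alice. observable 4 (Aq x)" using Aq_obs by blast
  have obsB: "\<forall>y\<in>Z6_bob. observable 4 (Bq y)" using Bq_obs by blast
  have mem: "6 * sqrt 15 \<in> quantum_values Z6_alice Z6_bob Z6_M"
    unfolding quantum_values_def mem_Collect_eq
    by (intro exI[of _ 4] exI[of _ psi_max4] exI[of _ Aq] exI[of _ Bq] conjI)
       (use quantum_witness psi4_unit obsA obsB in auto)
  have ub: "v \<le> 6 * sqrt 15" if "v \<in> quantum_values Z6_alice Z6_bob Z6_M" for v
    using that unfolding quantum_values_def using quantum_bound by blast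
  have qv: "quantum_value Z6_alice Z6_bob Z6_M = 6 * sqrt 15"
    unfolding quantum_value_def by (rule cSup_eq_maximum[OF mem ub])
  have qb: "\<forall>v\<in>qubit_values Z6_alice Z6_bob Z6_M. v \<le> 6 * (1 + 2 * sqrt 2)"
    unfolding qubit_values_def using qubit_bound by blast
  show ?thesis
    using classical_18 qv quantum_witness obsA obsB qubit_attain qb numerics by blast
qed

end
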